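(* Let $n\ge 1$ and let $p_1,\dots,p_n$ be distinct primes with $p_i\equiv 3$ or $7\pmod{20}$ for all $i$. Put $d=\prod_{i=1}^n(-p_i)$ and let $E_d$ be the elliptic curve $y^2=x(x^2+dx-d^2)$ over $\mathbb{Q}$. Then $\operatorname{rk}(E_d(\mathbb{Q}))=0$.
   Context: $E_d$ is the quadratic twist by $d$ of the curve $y^2=x(x^2+x-1)$ (a model of the modular curve $X_1(2,10)$). $\operatorname{rk}$ denotes the Mordell–Weil rank over $\mathbb{Q}$. *)

theory Defs
  imports "HOL-Algebra.FiniteProduct" "HOL-Library.Extended_Nat" "HOL-Computational_Algebra.Primes"
begin

text \<open>Rational points of the Weierstrass curve y^2 = x^3 + a2 x^2 + a4 x + a6 over Q.
  None is the point at infinity O, Some (x,y) an affine point.\<close>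

definition ec_points :: "rat \<Rightarrow> rat \<Rightarrow> rat \<Rightarrow> (rat \<times> rat) option set" where
  "ec_points a2 a4 a6 = {None} \<union>
     {Some (x, y) | x y. y^2 = x^3 + a2 * x^2 + a4 * x + a6}"

fun ec_add :: "rat \<Rightarrow> rat \<Rightarrow> rat \<Rightarrow> (rat \<times> rat) option \<Rightarrow> (rat \<times> rat) option \<Rightarrow> (rat \<times> rat) option" where
  "ec_add a2 a4 a6 None Q = Q"
| "ec_add a2 a4 a6 (Some P) None = Some P"
| "ec_add a2 a4 a6 (Some (x1, y1)) (Some (x2, y2)) =
     (if x1 = x2 \<and> y1 = - y2 then None
      else (let l = (if x1 = x2 then (3 * x1^2 + 2 * a2 * x1 + a4) / (2 * y1)
                     else (y2 - y1) / (x2 - x1));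
                x3 = l^2 - a2 - x1 - x2
            in Some (x3, - (l * (x3 - x1) + y1))))"

definition ec_group :: "rat \<Rightarrow> rat \<Rightarrow> rat \<Rightarrow> (rat \<times> rat) option monoid" where
  "ec_group a2 a4 a6 = \<lparr>carrier = ec_points a2 a4 a6, monoid.mult = ec_add a2 a4 a6, one = None\<rparr>"

definition ec_independent :: "rat \<Rightarrow> rat \<Rightarrow> rat \<Rightarrow> (rat \<times> rat) option set \<Rightarrow> bool" where
  "ec_independent a2 a4 a6 S \<longleftrightarrow> finite S \<and> S \<subseteq> ec_points a2 a4 a6 \<and>
     (\<forall>c :: (rat \<times> rat) option \<Rightarrow> int.
        finprod (ec_group a2 a4 a6) (\<lambda>P. P [^]\<^bsub>ec_group a2 a4 a6\<^esub> c P) S = None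
        \<longrightarrow> (\<forall>P\<in>S. c P = 0))"

definition ec_rank :: "rat \<Rightarrow> rat \<Rightarrow> rat \<Rightarrow> enat" where
  "ec_rank a2 a4 a6 = Sup {enat (card S) | S. ec_independent a2 a4 a6 S}"

end

theory Submission
  imports Defs "HOL-Number_Theory.Number_Theory" "HOL-Computational_Algebra.Nth_Powers"
begin

lemma H1:
  fixes p a b :: int
  assumes p: "prime p" and nq: "\<not> QuadRes p (-1)" and dv: "p dvd a^2 + b^2"
  shows "p dvd a"
proof (rule ccontr)
  assume na: "\<not> p dvd a"
  hence "coprime a p" using p by (metis prime_imp_coprime coprime_commute)
  then obtain i where i: "[a * i = 1] (mod p)" using cong_solve_coprime_int by blast
  have "p dvd (a*i - 1) * (a*i + 1)" using i by (metis cong_iff_dvd_diff cong_sym dvd_mult2)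
  hence d1: "p dvd (a*i)^2 - 1" by (simp add: power2_eq_square algebra_simps)
  have d2: "p dvd i^2 * (a^2 + b^2)" using dv by simp
  have "(b*i)^2 - (-1) = i^2 * (a^2 + b^2) - ((a*i)^2 - 1)" by (simp add: algebra_simps power2_eq_square)
  hence "p dvd (b*i)^2 - (-1)" using d1 d2 by (metis dvd_diff)
  hence "[(b*i)^2 = -1] (mod p)" by (simp add: cong_iff_dvd_diff)
  hence "QuadRes p (-1)" unfolding QuadRes_def by blast
  with nq show False by blast
qed

lemma H2:
  fixes p x z :: int
  assumes p: "prime p" and nq: "\<not> QuadRes p 5" and dv: "p dvd x^2 - 5 * z^2"
  shows "p dvd z"
proof (rule ccontr)
  assume na: "\<not> p dvd z"
  hence "coprime z p" using p by (simp add: prime_imp_coprime ac_simps)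
  then obtain i where i: "[z * i = 1] (mod p)" using cong_solve_coprime_int by blast
  have "p dvd (z*i - 1) * (z*i + 1)" using i by (metis cong_iff_dvd_diff cong_sym dvd_mult2)
  hence d1: "p dvd (z*i)^2 - 1" by (simp add: power2_eq_square algebra_simps)
  have d2: "p dvd i^2 * (x^2 - 5 * z^2)" using dv by simp
  have "(x*i)^2 - 5 = i^2 * (x^2 - 5 * z^2) + 5 * ((z*i)^2 - 1)" by (simp add: algebra_simps power2_eq_square)
  hence "p dvd (x*i)^2 - 5" using d1 d2 by (metis dvd_add dvd_mult)
  hence "[(x*i)^2 = 5] (mod p)" by (simp add: cong_iff_dvd_diff)
  hence "QuadRes p 5" unfolding QuadRes_def by blast
  with nq show False by blast
qed


lemma quad_aux:
  fixes D :: int assumes a: "0 \<le> 1 + D - D^2" "\<bar>D\<bar> \<ge> 3" shows False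
proof -
  have "D^2 = \<bar>D\<bar> * \<bar>D\<bar>" by (simp add: power2_eq_square abs_mult_self_eq)
  also have "\<dots> \<ge> 3 * \<bar>D\<bar>" using a(2) by (intro mult_right_mono) auto
  finally show False using a by linarith
qed

locale ecd =
  fixes d :: int
  assumes big: "3 \<le> \<bar>d\<bar>"
  and sqf: "\<And>p. prime p \<Longrightarrow> p dvd d \<Longrightarrow> \<not> p^2 dvd d"
  and nr5: "\<And>p. prime p \<Longrightarrow> p dvd d \<Longrightarrow> \<not> QuadRes p 5"
  and nrm1: "\<And>p. prime p \<Longrightarrow> p dvd d \<Longrightarrow> \<not> QuadRes p (-1)"
begin

lemma d_nz: "d \<noteq> 0" using big by auto

lemma p_ne2: "prime p \<Longrightarrow> p dvd d \<Longrightarrow> p \<noteq> 2"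
proof
  assume "prime p" "p dvd d" "p = 2"
  have "[1^2 = -1] (mod (2::int))" by (simp add: cong_def)
  hence "QuadRes 2 (-1)" unfolding QuadRes_def by blast
  thus False using nrm1 \<open>prime p\<close> \<open>p dvd d\<close> \<open>p = 2\<close> by blast
qed

lemma p_ne5: "prime p \<Longrightarrow> p dvd d \<Longrightarrow> p \<noteq> 5"
proof
  assume "prime p" "p dvd d" "p = 5"
  have "[0^2 = 5] (mod (5::int))" by (simp add: cong_def)
  hence "QuadRes 5 5" unfolding QuadRes_def by blast
  thus False using nr5 \<open>prime p\<close> \<open>p dvd d\<close> \<open>p = 5\<close> by blast
qed

lemma N4:
  fixes M e N :: int
  assumes e: "e > 0" and cop: "coprime M e" and M: "M \<noteq> 0"
    and eq: "N^2 = M^4 + d*M^2*e^2 - d^2*e^4"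
  shows "\<not> M^2 dvd (M^4 + d*M^2*e^2 - d^2*e^4)"
proof
  assume h: "M^2 dvd (M^4 + d*M^2*e^2 - d^2*e^4)"
  have "d^2*e^4 = (M^4 + d*M^2*e^2) - (M^4 + d*M^2*e^2 - d^2*e^4)" by simp
  moreover have "M^2 dvd (M^4 + d*M^2*e^2)" by (simp add: power2_eq_square power4_eq_xxxx)
  ultimately have "M^2 dvd d^2 * e^4" using h by (metis dvd_diff)
  moreover have "coprime (M^2) (e^4)" using cop by simp
  ultimately have "M^2 dvd d^2" by (meson coprime_dvd_mult_left_iff)
  hence "M dvd d" by simp
  then obtain k where k: "d = M * k" by blast
  have NB: "N^2 = M^2 * (M^2 + M*k*e^2 - k^2*e^4)" using eq k by (simp add: algebra_simps power2_eq_square power4_eq_xxxx)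
  hence "M^2 dvd N^2" by simp
  hence "M dvd N" by simp
  then obtain N' where N': "N = M * N'" by blast
  have B: "N'^2 = M^2 + M*k*e^2 - k^2*e^4"
    using NB M unfolding N' by (simp add: power_mult_distrib)
  have unit: "is_unit M"
  proof (rule ccontr)
    assume "\<not> is_unit M"
    then obtain p where p: "prime p" "p dvd M" using prime_divisor_exists M by blast
    have pd: "p dvd d" using p k by simp
    have pk: "\<not> p dvd k"
    proof
      assume "p dvd k"
      hence "p*p dvd M*k" using p by (simp add: mult_dvd_mono)
      thus False using sqf[OF p(1) pd] k by (simp add: power2_eq_square)
    qed
    have pe: "\<not> p dvd e"
      using p cop by (metis coprime_common_divisor not_prime_unit)
    have "N'^2 + (k*e^2)^2 = M * (M + k*e^2)" using B by (simp add: algebra_simps power2_eq_square power4_eq_xxxx)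
    hence "p dvd (k*e^2)^2 + N'^2" using p by (simp add: add.commute)
    hence "p dvd k*e^2" using H1[OF p(1) nrm1[OF p(1) pd]] by blast
    thus False using pk pe p(1) by (metis prime_dvd_mult_iff prime_dvd_power)
  qed
  hence "\<bar>M\<bar> = 1" by (simp add: zdvd1_eq)
  hence M2: "M^2 = 1" by (metis power2_abs power_one)
  have dk: "k^2 = d^2" using k M2 by (simp add: power_mult_distrib)
  have "0 \<le> N'^2" by simp
  moreover have "N'^2 = 1 + d*e^2 - d^2*e^4" using B unfolding M2 dk k[symmetric] .
  ultimately have "0 \<le> 1 + d*e^2 - d^2*e^4" by simp
  moreover have "\<bar>d*e^2\<bar> \<ge> 3"
  proof -
    have "e^2 \<ge> 1" using e by (simp add: one_le_power)
    hence "\<bar>d\<bar> * 1 \<le> \<bar>d\<bar> * e^2" by (intro mult_left_mono) auto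
    thus ?thesis using big by (simp add: abs_mult)
  qed
  moreover have "d^2*e^4 = (d*e^2)^2" by (simp add: power_mult_distrib power2_eq_square power4_eq_xxxx)
  ultimately show False using quad_aux[of "d*e^2"] by simp
qed

end

lemma sq_of_even_mult:
  fixes x :: int
  assumes "x \<noteq> 0" "\<And>p. prime p \<Longrightarrow> even (multiplicity p x)"
  shows "\<exists>u. \<bar>x\<bar> = u^2"
proof -
  have "is_nth_power 2 (normalize x)"
    using is_nth_power_conv_multiplicity[of 2 x] assms(2) by auto
  then obtain u where "normalize x = u^2" by (auto elim: is_nth_powerE)
  thus ?thesis by auto
qed

lemma mult_sq_even:
  fixes p z :: int
  assumes "prime p" "z \<noteq> 0"
  shows "even (multiplicity p (z^2))"
  using assms prime_elem_multiplicity_power_distrib[OF prime_imp_prime_elem[OF assms(1)] assms(2), of 2] by simp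

lemma mult3:
  fixes p x y w :: int
  assumes "prime p" "x \<noteq> 0" "y \<noteq> 0" "w \<noteq> 0"
  shows "multiplicity p (x*y*w) = multiplicity p x + multiplicity p y + multiplicity p w"
  using assms prime_elem_multiplicity_mult_distrib[OF prime_imp_prime_elem[OF assms(1)]] by simp

lemma mult_p2:
  fixes p y :: int
  assumes "prime p" "y \<noteq> 0"
  shows "multiplicity p (p^2 * y) = 2 + multiplicity p y"
proof -
  have pe: "prime_elem p" using assms(1) by (rule prime_imp_prime_elem)
  hence "p \<noteq> 0" by auto
  thus ?thesis using prime_elem_multiplicity_mult_distrib[OF pe, of "p^2" y] assms pe
    by (simp add: multiplicity_prime_power)
qed

lemma mult_eq2:
  fixes p K :: int
  assumes "p^2 dvd K" "\<not> p^3 dvd K"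
  shows "multiplicity p K = 2"
  using multiplicity_eqI[of p 2 K] assms by (simp add: numeral_3_eq_3)

lemma mult_ge3:
  fixes p a :: int
  assumes "prime p" "a \<noteq> 0" "odd (multiplicity p a)" "multiplicity p a \<noteq> 1"
  shows "p^3 dvd a"
proof -
  have "multiplicity p a \<ge> 3" using assms(3,4) by presburger
  thus ?thesis by (rule multiplicity_dvd')
qed

lemma mult_eq1:
  fixes p a :: int
  assumes "prime p" "a \<noteq> 0" "multiplicity p a = 1"
  shows "\<exists>a'. a = p * a' \<and> \<not> p dvd a'"
proof -
  have "p dvd a" using multiplicity_dvd[of p a] assms by simp
  then obtain a' where a': "a = p * a'" by blast
  have "\<not> p dvd a'"
  proof
    assume "p dvd a'"
    hence "p^2 dvd a" using a' by (simp add: power2_eq_square)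
    hence "multiplicity p a \<ge> 2" using assms by (intro multiplicity_geI) (auto simp: prime_elem_not_unit)
    thus False using assms by simp
  qed
  thus ?thesis using a' by blast
qed

context ecd
begin

lemma split_d:
  assumes "prime p" "p dvd d"
  shows "\<exists>d'. d = p * d' \<and> \<not> p dvd d'"
proof -
  obtain d' where "d = p * d'" using assms by blast
  moreover have "\<not> p dvd d'"
  proof
    assume "p dvd d'"
    hence "p^2 dvd d" using \<open>d = p * d'\<close> by (simp add: power2_eq_square)
    thus False using sqf assms by blast
  qed
  ultimately show ?thesis by blast
qed

end

context ecd
begin

lemma d_prime: "\<exists>p. prime p \<and> p dvd d"
proof -
  have "\<not> is_unit d" using big by (auto simp: zdvd1_eq)
  thus ?thesis using prime_divisor_exists[of d] d_nz by blast
qed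

lemma pd_not_pb:
  fixes a b p :: int
  assumes "coprime a b" "prime p" "p dvd a" shows "\<not> p dvd b"
  using assms by (metis coprime_common_divisor not_prime_unit)

lemma N1int:
  fixes a b z :: int
  assumes b: "b > 0" and cop: "coprime a b" and a: "a \<noteq> 0"
    and eq: "z^2 = a * b * (a^2 + d*a*b - d^2*b^2)"
  shows "(\<exists>u. \<bar>a\<bar> = u^2) \<and> (\<exists>v. b = v^2)"
proof -
  define K where "K = a^2 + d*a*b - d^2*b^2"
  have K0: "K \<noteq> 0"
  proof
    assume K: "K = 0"
    obtain p where p: "prime p" "p dvd d" using d_prime by blast
    have "a^2 = K - d*a*b + d^2*b^2" unfolding K_def by simp
    hence "p dvd a^2" using p K by (simp add: power2_eq_square)
    hence pa: "p dvd a" using p by (simp add: prime_dvd_power_iff)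
    then obtain a' where a': "a = p * a'" by blast
    obtain d' where d': "d = p * d'" "\<not> p dvd d'" using split_d p by blast
    have "K = p^2 * (a'^2 + d'*a'*b - d'^2*b^2)" unfolding K_def a' d'(1)
      by (simp add: algebra_simps power2_eq_square)
    hence "a'^2 + d'*a'*b - d'^2*b^2 = 0" using K p by (simp add: prime_gt_0_int)
    moreover have "(2*a' + d'*b)^2 - 5*(d'*b)^2 = 4 * (a'^2 + d'*a'*b - d'^2*b^2)"
      by (simp add: algebra_simps power2_eq_square)
    ultimately have "(2*a' + d'*b)^2 - 5*(d'*b)^2 = 0" by simp
    hence "p dvd d'*b" using H2[OF p(1) nr5[OF p], of "2*a' + d'*b" "d'*b"] by simp
    thus False using d'(2) pd_not_pb[OF cop p(1) pa] p(1) by (simp add: prime_dvd_mult_iff)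
  qed
  have eqK: "z^2 = a*b*K" using eq unfolding K_def .
  have "a*b*K \<noteq> 0" using a b K0 by simp
  hence z0: "z \<noteq> 0" using eqK by auto
  have vsum: "even (multiplicity p a + multiplicity p b + multiplicity p K)" if p: "prime p" for p
  proof -
    have "b \<noteq> 0" using b by simp
    hence "multiplicity p (z^2) = multiplicity p a + multiplicity p b + multiplicity p K"
      unfolding eqK using mult3[OF p a _ K0] by blast
    thus ?thesis using mult_sq_even[OF p z0] by simp
  qed
  have bsq: "\<exists>v. b = v^2"
  proof -
    have "even (multiplicity p b)" if p: "prime p" for p
    proof (cases "p dvd b")
      case True
      have na: "\<not> p dvd a" using pd_not_pb[of b a p] cop p True by (simp add: coprime_commute)
      have "\<not> p dvd K"
      proof
        assume "p dvd K"
        moreover have "a^2 = K - b * (d*a - d^2*b)" unfolding K_def by (simp add: algebra_simps power2_eq_square)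
        ultimately have "p dvd a^2" using True by simp
        thus False using na p by (simp add: prime_dvd_power_iff)
      qed
      thus ?thesis using vsum[OF p] na by (simp add: not_dvd_imp_multiplicity_0)
    next
      case False thus ?thesis by (simp add: not_dvd_imp_multiplicity_0)
    qed
    hence "\<exists>v. \<bar>b\<bar> = v^2" using sq_of_even_mult[of b] b by simp
    thus ?thesis using b by simp
  qed
  have "even (multiplicity p a)" if p: "prime p" for p
  proof (cases "p dvd a")
    case False thus ?thesis by (simp add: not_dvd_imp_multiplicity_0)
  next
    case pa: True
    have nb: "\<not> p dvd b" using pd_not_pb[OF cop p pa] .
    hence mb: "multiplicity p b = 0" by (simp add: not_dvd_imp_multiplicity_0)
    show ?thesis
    proof (cases "p dvd d")
      case False
      have "\<not> p dvd K"
      proof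
        assume "p dvd K"
        moreover have "d^2*b^2 = a * (a + d*b) - K" unfolding K_def by (simp add: algebra_simps power2_eq_square)
        ultimately have "p dvd d^2*b^2" using pa by simp
        thus False using False nb p by (simp add: prime_dvd_mult_iff prime_dvd_power_iff)
      qed
      thus ?thesis using vsum[OF p] mb by (simp add: not_dvd_imp_multiplicity_0)
    next
      case pd: True
      obtain d' where d': "d = p * d'" "\<not> p dvd d'" using split_d p pd by blast
      show ?thesis
      proof (rule ccontr)
        assume odd: "odd (multiplicity p a)"
        show False
        proof (cases "multiplicity p a = 1")
          case True
          obtain a' where a': "a = p * a'" "\<not> p dvd a'" using mult_eq1[OF p a True] by blast
          define K' where "K' = a'^2 + d'*a'*b - d'^2*b^2"
          have KK: "K = p^2 * K'" unfolding K_def K'_def a' d'(1)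
            by (simp add: algebra_simps power2_eq_square)
          hence K'0: "K' \<noteq> 0" using K0 by auto
          have "multiplicity p K = 2 + multiplicity p K'" using KK mult_p2[OF p K'0] by simp
          hence "odd (multiplicity p K')" using vsum[OF p] True mb by simp
          hence "multiplicity p K' > 0" by (rule odd_pos)
          hence "1 \<le> multiplicity p K'" by simp
          hence "p dvd K'" using multiplicity_dvd'[of 1 p K'] by simp
          hence "p dvd 4 * K'" by simp
          moreover have "4 * K' = (2*a' + d'*b)^2 - 5*(d'*b)^2" unfolding K'_def by (simp add: algebra_simps power2_eq_square)
          ultimately have "p dvd (2*a' + d'*b)^2 - 5*(d'*b)^2" by simp
          hence "p dvd d'*b" using H2[OF p nr5[OF p pd], of "2*a' + d'*b" "d'*b"] by simp
          thus False using d'(2) nb p by (simp add: prime_dvd_mult_iff)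
        next
          case False
          have p3: "p^3 dvd a" using mult_ge3[OF p a odd False] .
          have "p^2 dvd K"
          proof -
            have "p^2 dvd a^2" using pa by simp
            moreover have "p^2 dvd d*a*b" using pa pd by (simp add: power2_eq_square mult_dvd_mono)
            moreover have "p^2 dvd d^2*b^2" using pd by simp
            ultimately show ?thesis unfolding K_def by (simp add: dvd_add dvd_diff)
          qed
          moreover have "\<not> p^3 dvd K"
          proof
            assume p3K: "p^3 dvd K"
            have "p^3 dvd a^2" using p3 by (metis dvd_mult2 power2_eq_square)
            moreover have "p^3 dvd d*a*b" using p3 by simp
            moreover have "d^2*b^2 = a^2 + d*a*b - K" unfolding K_def by simp
            ultimately have "p^3 dvd d^2*b^2" using p3K by (metis dvd_add dvd_diff)
            moreover have "d^2*b^2 = p^2 * (d'^2*b^2)" by (simp add: d'(1) power_mult_distrib)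
            moreover have "(p^3::int) = p^2 * p" by (simp add: power2_eq_square numeral_3_eq_3)
            ultimately have "p^2 * p dvd p^2 * (d'^2*b^2)" by simp
            hence "p dvd d'^2*b^2" using p by (simp add: prime_gt_0_int)
            thus False using d'(2) nb p by (simp add: prime_dvd_mult_iff prime_dvd_power_iff)
          qed
          ultimately have "multiplicity p K = 2" by (rule mult_eq2)
          thus False using vsum[OF p] mb odd by simp
        qed
      qed
    qed
  qed
  hence "\<exists>u. \<bar>a\<bar> = u^2" using sq_of_even_mult[of a] a by blast
  thus ?thesis using bsq by blast
qed

end

lemma prime_dvd5: "prime (p::int) \<Longrightarrow> p dvd 5 \<Longrightarrow> p = 5"
proof -
  assume p: "prime p" "p dvd 5"
  have "p > 1" using p prime_gt_1_int by blast
  moreover have "p \<le> 5" using p by (simp add: zdvd_imp_le)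
  ultimately have "p = 2 \<or> p = 3 \<or> p = 4 \<or> p = 5" by arith
  thus "p = 5" using p by auto
qed

lemma prime_dvd2: "prime (p::int) \<Longrightarrow> p dvd 2 \<Longrightarrow> p = 2"
proof -
  assume p: "prime p" "p dvd 2"
  have "p > 1" using p prime_gt_1_int by blast
  moreover have "p \<le> 2" using p by (simp add: zdvd_imp_le)
  ultimately show "p = 2" by arith
qed

context ecd
begin

lemma N2int:
  fixes a b z :: int
  assumes b: "b > 0" and cop: "coprime a b" and a: "a \<noteq> 0"
    and eq: "z^2 = a * b * (a^2 - 2*d*a*b + 5*d^2*b^2)"
  shows "a > 0 \<and> (\<exists>v. b = v^2) \<and> ((\<exists>u. a = u^2) \<or> (\<exists>u. a = 5*u^2))"
proof -
  define K where "K = a^2 - 2*d*a*b + 5*d^2*b^2"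
  have Kid: "K = (a - d*b)^2 + 4*(d*b)^2" unfolding K_def by (simp add: algebra_simps power2_eq_square)
  have "d*b \<noteq> 0" using d_nz b by simp
  hence "(d*b)^2 > 0" by simp
  hence Kpos: "K > 0" unfolding Kid by (smt (verit) zero_le_power2)
  hence K0: "K \<noteq> 0" by simp
  have eqK: "z^2 = a*b*K" using eq unfolding K_def .
  have apos: "a > 0"
  proof (rule ccontr)
    assume "\<not> a > 0"
    hence "a < 0" using a by simp
    hence "a*b < 0" using b by (simp add: mult_neg_pos)
    hence "a*b*K < 0" using Kpos by (simp add: mult_neg_pos)
    thus False using eqK by (metis not_less zero_le_power2)
  qed
  have "a*b*K \<noteq> 0" using a b K0 by simp
  hence z0: "z \<noteq> 0" using eqK by auto
  have vsum: "even (multiplicity p a + multiplicity p b + multiplicity p K)" if p: "prime p" for p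
  proof -
    have "b \<noteq> 0" using b by simp
    hence "multiplicity p (z^2) = multiplicity p a + multiplicity p b + multiplicity p K"
      unfolding eqK using mult3[OF p a _ K0] by blast
    thus ?thesis using mult_sq_even[OF p z0] by simp
  qed
  have bsq: "\<exists>v. b = v^2"
  proof -
    have "even (multiplicity p b)" if p: "prime p" for p
    proof (cases "p dvd b")
      case True
      have na: "\<not> p dvd a" using pd_not_pb[of b a p] cop p True by (simp add: coprime_commute)
      have "\<not> p dvd K"
      proof
        assume "p dvd K"
        moreover have "a^2 = K - b * (5*d^2*b - 2*d*a)" unfolding K_def by (simp add: algebra_simps power2_eq_square)
        ultimately have "p dvd a^2" using True by simp
        thus False using na p by (simp add: prime_dvd_power_iff)
      qed
      thus ?thesis using vsum[OF p] na by (simp add: not_dvd_imp_multiplicity_0)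
    next
      case False thus ?thesis by (simp add: not_dvd_imp_multiplicity_0)
    qed
    hence "\<exists>v. \<bar>b\<bar> = v^2" using sq_of_even_mult[of b] b by simp
    thus ?thesis using b by simp
  qed
  have ev: "even (multiplicity p a)" if p: "prime p" and p5: "p \<noteq> 5" for p
  proof (cases "p dvd a")
    case False thus ?thesis by (simp add: not_dvd_imp_multiplicity_0)
  next
    case pa: True
    have nb: "\<not> p dvd b" using pd_not_pb[OF cop p pa] .
    hence mb: "multiplicity p b = 0" by (simp add: not_dvd_imp_multiplicity_0)
    have n5: "\<not> p dvd 5" using prime_dvd5[OF p] p5 by blast
    show ?thesis
    proof (cases "p dvd d")
      case False
      have "\<not> p dvd K"
      proof
        assume "p dvd K"
        moreover have "5*d^2*b^2 = K - a * (a - 2*d*b)" unfolding K_def by (simp add: algebra_simps power2_eq_square)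
        ultimately have "p dvd 5*d^2*b^2" using pa by simp
        thus False using False nb n5 p by (simp add: prime_dvd_mult_iff prime_dvd_power_iff)
      qed
      thus ?thesis using vsum[OF p] mb by (simp add: not_dvd_imp_multiplicity_0)
    next
      case pd: True
      obtain d' where d': "d = p * d'" "\<not> p dvd d'" using split_d p pd by blast
      show ?thesis
      proof (rule ccontr)
        assume odd: "odd (multiplicity p a)"
        show False
        proof (cases "multiplicity p a = 1")
          case True
          obtain a' where a': "a = p * a'" "\<not> p dvd a'" using mult_eq1[OF p a True] by blast
          define K' where "K' = a'^2 - 2*d'*a'*b + 5*d'^2*b^2"
          have KK: "K = p^2 * K'" unfolding K_def K'_def a' d'(1)
            by (simp add: algebra_simps power2_eq_square)
          hence K'0: "K' \<noteq> 0" using K0 by auto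
          have "multiplicity p K = 2 + multiplicity p K'" using KK mult_p2[OF p K'0] by simp
          hence "odd (multiplicity p K')" using vsum[OF p] True mb by simp
          hence "multiplicity p K' > 0" by (rule odd_pos)
          hence "1 \<le> multiplicity p K'" by simp
          hence "p dvd K'" using multiplicity_dvd'[of 1 p K'] by simp
          moreover have "K' = (2*d'*b)^2 + (a' - d'*b)^2" unfolding K'_def by (simp add: algebra_simps power2_eq_square)
          ultimately have "p dvd (2*d'*b)^2 + (a' - d'*b)^2" by simp
          hence "p dvd 2*d'*b" using H1[OF p nrm1[OF p pd], of "2*d'*b" "a' - d'*b"] by simp
          moreover have "\<not> p dvd 2" using prime_dvd2[OF p] p_ne2[OF p pd] by blast
          ultimately show False using d'(2) nb p by (simp add: prime_dvd_mult_iff)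
        next
          case False
          have p3: "p^3 dvd a" using mult_ge3[OF p a odd False] .
          have "p^2 dvd K"
          proof -
            have "p^2 dvd a^2" using pa by simp
            moreover have "p^2 dvd 2*d*a*b" using pa pd by (simp add: power2_eq_square mult_dvd_mono)
            moreover have "p^2 dvd 5*d^2*b^2" using pd by simp
            ultimately show ?thesis unfolding K_def by (simp add: dvd_add dvd_diff)
          qed
          moreover have "\<not> p^3 dvd K"
          proof
            assume p3K: "p^3 dvd K"
            have "p^3 dvd a^2" using p3 by (metis dvd_mult2 power2_eq_square)
            moreover have "p^3 dvd 2*d*a*b" using p3 by simp
            moreover have "5*d^2*b^2 = K - a^2 + 2*d*a*b" unfolding K_def by simp
            ultimately have "p^3 dvd 5*d^2*b^2" using p3K by (metis dvd_add dvd_diff)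
            moreover have "5*d^2*b^2 = p^2 * (5*d'^2*b^2)" by (simp add: d'(1) power_mult_distrib)
            moreover have "(p^3::int) = p^2 * p" by (simp add: power2_eq_square numeral_3_eq_3)
            ultimately have "p^2 * p dvd p^2 * (5*d'^2*b^2)" by simp
            hence "p dvd 5*d'^2*b^2" using p by (simp add: prime_gt_0_int)
            thus False using d'(2) nb n5 p by (simp add: prime_dvd_mult_iff prime_dvd_power_iff)
          qed
          ultimately have "multiplicity p K = 2" by (rule mult_eq2)
          thus False using vsum[OF p] mb odd by simp
        qed
      qed
    qed
  qed
  have "(\<exists>u. a = u^2) \<or> (\<exists>u. a = 5*u^2)"
  proof (cases "even (multiplicity 5 a)")
    case True
    have "even (multiplicity p a)" if p: "prime p" for p
      using ev[OF p] True by (cases "p = 5") auto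
    hence "\<exists>u. \<bar>a\<bar> = u^2" using sq_of_even_mult[of a] a by blast
    thus ?thesis using apos by simp
  next
    case False
    hence "multiplicity 5 a > 0" by (intro odd_pos)
    hence "1 \<le> multiplicity 5 a" by simp
    hence "5 dvd a" using multiplicity_dvd'[of 1 5 a] by simp
    then obtain a5 where a5: "a = 5 * a5" by blast
    hence a50: "a5 \<noteq> 0" using a by simp
    have m5: "multiplicity 5 a = Suc (multiplicity 5 a5)" unfolding a5 by (rule multiplicity_times_same) (use a50 in auto)
    have "even (multiplicity p a5)" if p: "prime p" for p
    proof (cases "p = 5")
      case True thus ?thesis using False m5 by simp
    next
      case p5: False
      have "\<not> p dvd 5" using prime_dvd5[OF p] p5 by blast
      hence "multiplicity p (5::int) = 0" by (simp add: not_dvd_imp_multiplicity_0)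
      moreover have "multiplicity p a = multiplicity p (5::int) + multiplicity p a5"
        unfolding a5 using prime_elem_multiplicity_mult_distrib[OF prime_imp_prime_elem[OF p], of 5 a5] a50 by simp
      ultimately show ?thesis using ev[OF p p5] by simp
    qed
    hence "\<exists>u. \<bar>a5\<bar> = u^2" using sq_of_even_mult[of a5] a50 by blast
    moreover have "a5 > 0" using apos a5 by simp
    ultimately show ?thesis using a5 by auto
  qed
  thus ?thesis using apos bsq by blast
qed

end

definition den :: "rat \<Rightarrow> int" where "den q = snd (quotient_of q)"

lemma den_pos: "den q > 0" unfolding den_def by (rule quotient_of_denom_pos')

lemma den_frac: "B > 0 \<Longrightarrow> den (of_int A / of_int B) = B div gcd A B"
  unfolding den_def Fract_of_int_quotient[symmetric] quotient_of_Fract normalize_def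
  by (simp add: Let_def)

lemma den_frac': 
  assumes "B \<noteq> 0" shows "den (of_int A / of_int B) = \<bar>B\<bar> div gcd A B"
proof (cases "B > 0")
  case True thus ?thesis using den_frac by simp
next
  case False
  hence "- B > 0" using assms by simp
  moreover have "(of_int A / of_int B :: rat) = of_int (-A) / of_int (-B)" by simp
  ultimately show ?thesis using den_frac[of "-B" "-A"] False by simp
qed

lemma den_DL:
  fixes A B n c :: int
  assumes B: "B \<noteq> 0" and n: "n > 0" and cop: "coprime A n" and Bc: "\<bar>B\<bar> = n * c"
  shows "den (of_int A / of_int B) = n * (c div gcd A B) \<and> gcd A B dvd c \<and> c > 0"
proof -
  have "0 < n * c" using B Bc by simp
  hence c: "c > 0" using n by (metis zero_less_mult_pos)
  define G where "G = gcd A B"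
  have "coprime G n" unfolding G_def using cop by (meson coprime_imp_coprime gcd_dvd1 dvd_trans)
  moreover have "G dvd n * c" unfolding G_def using Bc by (metis gcd_dvd2 dvd_abs_iff)
  ultimately have Gc: "G dvd c" by (meson coprime_dvd_mult_left_iff coprime_dvd_mult_right_iff)
  have "den (of_int A / of_int B) = (n * c) div G" unfolding G_def using den_frac'[OF B] Bc by simp
  also have "\<dots> = n * (c div G)" using div_mult_swap[OF Gc] by simp
  finally show ?thesis using Gc c unfolding G_def by simp
qed

lemma rat_sq_int:
  fixes q :: rat
  assumes "q^2 = of_int A"
  shows "\<exists>n. q = of_int n"
proof -
  obtain u v where uv: "quotient_of q = (u, v)" by (cases "quotient_of q")
  have v: "v > 0" using quotient_of_denom_pos[OF uv] .
  have cop: "coprime u v" using quotient_of_coprime[OF uv] .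
  have q: "q = of_int u / of_int v" using quotient_of_div[OF uv] .
  have "(of_int u / of_int v :: rat)^2 = of_int A" using assms q by simp
  hence "(of_int u :: rat)^2 = of_int A * (of_int v)^2" using v by (simp add: field_simps power2_eq_square)
  hence "u^2 = A * v^2" by (metis of_int_eq_iff of_int_mult of_int_power)
  hence "v^2 dvd u^2" by simp
  hence "v dvd u" by simp
  hence "is_unit v" using cop by (metis coprime_common_divisor dvd_refl)
  hence "v = 1" using v by (simp add: zdvd1_eq)
  thus ?thesis using q by auto
qed

lemma coprime_plus_mult:
  fixes m n t :: int
  assumes "coprime m n" shows "coprime (m^2 + n * t) n"
proof -
  have "coprime (m^2) n" using assms by simp
  thus ?thesis by (metis add.commute coprime_iff_gcd_eq_1 gcd.commute gcd_add_mult mult.commute)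
qed

context ecd
begin

abbreviation "dq \<equiv> (of_int d :: rat)"

definition onE :: "rat \<Rightarrow> rat \<Rightarrow> bool" where
  "onE x y \<longleftrightarrow> y^2 = x^3 + dq*x^2 - dq^2*x"
definition onE' :: "rat \<Rightarrow> rat \<Rightarrow> bool" where
  "onE' x y \<longleftrightarrow> y^2 = x^3 - 2*dq*x^2 + 5*dq^2*x"
definition phi :: "rat \<Rightarrow> rat" where "phi x = (x^2 + dq*x - dq^2) / x"
definition psi :: "rat \<Rightarrow> rat" where "psi x = (x^2 - 2*dq*x + 5*dq^2) / (4*x)"

lemma N1rat:
  assumes "onE x y" "x \<noteq> 0"
  shows "\<exists>r. r \<noteq> 0 \<and> (x = r^2 \<or> x = -(r^2))"
proof -
  obtain a b where ab: "quotient_of x = (a, b)" by (cases "quotient_of x")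
  have b: "b > 0" using quotient_of_denom_pos[OF ab] .
  have cop: "coprime a b" using quotient_of_coprime[OF ab] .
  have x: "x = of_int a / of_int b" using quotient_of_div[OF ab] .
  have a: "a \<noteq> 0" using assms(2) x by auto
  define B where "B = (of_int b :: rat)"
  have B0: "B \<noteq> 0" using b B_def by simp
  have xB: "x * B = of_int a" using x B0 B_def by simp
  have "(y * B^2)^2 = y^2 * B^4" by (simp add: power_mult_distrib flip: power_mult)
  also have "\<dots> = (x^3 + dq*x^2 - dq^2*x) * B^4" using assms(1) onE_def by simp
  also have "\<dots> = (x*B)^3*B + dq*(x*B)^2*B^2 - dq^2*(x*B)*B^3" by (simp add: algebra_simps power2_eq_square power3_eq_cube power4_eq_xxxx)
  also have "\<dots> = of_int (a * b * (a^2 + d*a*b - d^2*b^2))" unfolding xB unfolding B_def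
    by (simp add: algebra_simps power2_eq_square power3_eq_cube)
  finally have yz: "(y * B^2)^2 = of_int (a * b * (a^2 + d*a*b - d^2*b^2))" .
  then obtain z where z: "y * B^2 = of_int z" using rat_sq_int by blast
  have "of_int (z^2) = (of_int (a * b * (a^2 + d*a*b - d^2*b^2)) :: rat)"
    using yz z by simp
  hence "z^2 = a * b * (a^2 + d*a*b - d^2*b^2)" by (simp only: of_int_eq_iff)
  from N1int[OF b cop a this] obtain u v where uv: "\<bar>a\<bar> = u^2" "b = v^2" by blast
  have u0: "u \<noteq> 0" using uv a by auto
  have v0: "v \<noteq> 0" using uv b by auto
  define r where "r = (of_int u / of_int v :: rat)"
  have r0: "r \<noteq> 0" using u0 v0 r_def by simp
  have r2: "r^2 = of_int (\<bar>a\<bar>) / of_int b" unfolding r_def uv by (simp add: power_divide)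
  show ?thesis
  proof (cases "a \<ge> 0")
    case True thus ?thesis using r0 r2 x by auto
  next
    case False
    hence "x = - (r^2)" using r2 x by simp
    thus ?thesis using r0 by blast
  qed
qed

lemma N2rat:
  assumes "onE' x y" "x \<noteq> 0"
  shows "\<exists>r. r \<noteq> 0 \<and> (x = r^2 \<or> x = 5*r^2)"
proof -
  obtain a b where ab: "quotient_of x = (a, b)" by (cases "quotient_of x")
  have b: "b > 0" using quotient_of_denom_pos[OF ab] .
  have cop: "coprime a b" using quotient_of_coprime[OF ab] .
  have x: "x = of_int a / of_int b" using quotient_of_div[OF ab] .
  have a: "a \<noteq> 0" using assms(2) x by auto
  define B where "B = (of_int b :: rat)"
  have B0: "B \<noteq> 0" using b B_def by simp
  have xB: "x * B = of_int a" using x B0 B_def by simp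
  have "(y * B^2)^2 = y^2 * B^4" by (simp add: power_mult_distrib flip: power_mult)
  also have "\<dots> = (x^3 - 2*dq*x^2 + 5*dq^2*x) * B^4" using assms(1) onE'_def by simp
  also have "\<dots> = (x*B)^3*B - 2*dq*(x*B)^2*B^2 + 5*dq^2*(x*B)*B^3" by (simp add: algebra_simps power2_eq_square power3_eq_cube power4_eq_xxxx)
  also have "\<dots> = of_int (a * b * (a^2 - 2*d*a*b + 5*d^2*b^2))" unfolding xB unfolding B_def
    by (simp add: algebra_simps power2_eq_square power3_eq_cube)
  finally have yz: "(y * B^2)^2 = of_int (a * b * (a^2 - 2*d*a*b + 5*d^2*b^2))" .
  then obtain z where z: "y * B^2 = of_int z" using rat_sq_int by blast
  have "of_int (z^2) = (of_int (a * b * (a^2 - 2*d*a*b + 5*d^2*b^2)) :: rat)"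
    using yz z by simp
  hence "z^2 = a * b * (a^2 - 2*d*a*b + 5*d^2*b^2)" by (simp only: of_int_eq_iff)
  from N2int[OF b cop a this] obtain v where apos: "a > 0" and v: "b = v^2"
     and au: "(\<exists>u. a = u^2) \<or> (\<exists>u. a = 5*u^2)" by blast
  have v0: "v \<noteq> 0" using v b by auto
  from au show ?thesis
  proof
    assume "\<exists>u. a = u^2"
    then obtain u where u: "a = u^2" by blast
    have "u \<noteq> 0" using u a by auto
    hence "(of_int u / of_int v :: rat) \<noteq> 0" using v0 by simp
    moreover have "x = (of_int u / of_int v)^2" unfolding x u v by (simp add: power_divide)
    ultimately show ?thesis by blast
  next
    assume "\<exists>u. a = 5*u^2"
    then obtain u where u: "a = 5*u^2" by blast
    have "u \<noteq> 0" using u a by auto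
    hence "(of_int u / of_int v :: rat) \<noteq> 0" using v0 by simp
    moreover have "x = 5*(of_int u / of_int v)^2" unfolding x u v by (simp add: power_divide)
    ultimately show ?thesis by blast
  qed
qed

end

context ecd
begin

lemma dq_nz: "dq \<noteq> 0" using d_nz by simp

lemma N3rat:
  assumes x0: "x \<noteq> 0"
  shows "den x \<le> den (psi x)"
proof -
  obtain m n where mn: "quotient_of x = (m, n)" by (cases "quotient_of x")
  have n: "n > 0" using quotient_of_denom_pos[OF mn] .
  have cop: "coprime m n" using quotient_of_coprime[OF mn] .
  have x: "x = of_int m / of_int n" using quotient_of_div[OF mn] .
  have m: "m \<noteq> 0" using x0 x by auto
  have dx: "den x = n" unfolding den_def mn by simp
  define A where "A = m^2 - 2*d*m*n + 5*d^2*n^2"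
  have "psi x = of_int A / of_int (4*m*n)"
    unfolding psi_def x A_def using n m by (simp add: field_simps power2_eq_square)
  moreover have "coprime A n"
  proof -
    have "A = m^2 + n * (5*d^2*n - 2*d*m)" unfolding A_def by (simp add: algebra_simps power2_eq_square)
    thus ?thesis using coprime_plus_mult[OF cop] by simp
  qed
  moreover have "\<bar>4*m*n\<bar> = n * (4*\<bar>m\<bar>)" using n by (simp add: abs_mult)
  moreover have "4*m*n \<noteq> 0" using m n by simp
  ultimately have "den (psi x) = n * ((4*\<bar>m\<bar>) div gcd A (4*m*n))" and g: "gcd A (4*m*n) dvd 4*\<bar>m\<bar>"
    using den_DL[of "4*m*n" n A "4*\<bar>m\<bar>"] n by auto
  moreover have "(4*\<bar>m\<bar>) div gcd A (4*m*n) \<ge> 1"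
  proof -
    have "gcd A (4*m*n) > 0" using \<open>4*m*n \<noteq> 0\<close> by simp
    moreover have "4*\<bar>m\<bar> > 0" using m by simp
    ultimately show ?thesis using g by (metis dvd_div_eq_0_iff int_one_le_iff_zero_less pos_imp_zdiv_nonneg_iff order_le_less not_less zero_less_iff_neq_zero)
  qed
  ultimately show ?thesis using dx n
    by (metis mult.right_neutral mult_left_mono less_imp_le)
qed

end

context ecd
begin

lemma w_rel:
  assumes "onE x y" "x = r^2" "r \<noteq> 0"
  shows "(y/r)^2 = r^4 + dq*r^2 - dq^2"
proof -
  have "y^2 = r^2 * (r^4 + dq*r^2 - dq^2)" using assms(1,2) unfolding onE_def
    by (simp add: algebra_simps power2_eq_square power3_eq_cube power4_eq_xxxx)
  thus ?thesis using assms(3) by (simp add: power_divide)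
qed

lemma N4rat:
  assumes E: "onE x y" and xr: "x = r^2" and r0: "r \<noteq> 0"
  shows "den x < den (phi x)"
proof -
  obtain M e where Me: "quotient_of r = (M, e)" by (cases "quotient_of r")
  have e: "e > 0" using quotient_of_denom_pos[OF Me] .
  have cop: "coprime M e" using quotient_of_coprime[OF Me] .
  have r: "r = of_int M / of_int e" using quotient_of_div[OF Me] .
  have M: "M \<noteq> 0" using r0 r by auto
  define S where "S = (of_int e :: rat)"
  have S0: "S \<noteq> 0" using e S_def by simp
  have rS: "r * S = of_int M" using r S0 S_def by simp
  define A where "A = M^4 + d*M^2*e^2 - d^2*e^4"
  define w where "w = y / r"
  have w2: "w^2 = r^4 + dq*r^2 - dq^2" using w_rel[OF E xr r0] w_def by simp
  have "(w * S^2)^2 = w^2 * S^4" by (simp add: power_mult_distrib flip: power_mult)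
  also have "\<dots> = (r*S)^4 + dq*(r*S)^2*S^2 - dq^2*S^4" unfolding w2
    by (simp add: algebra_simps power2_eq_square power4_eq_xxxx)
  also have "\<dots> = of_int A" unfolding rS unfolding S_def A_def by simp
  finally obtain N where N: "w * S^2 = of_int N" using rat_sq_int by blast
  have "of_int (N^2) = (of_int A :: rat)"
    using \<open>(w * S^2)^2 = w^2 * S^4\<close> \<open>w^2 * S^4 = _\<close> \<open>_ = of_int A\<close> N by simp
  hence NA: "N^2 = M^4 + d*M^2*e^2 - d^2*e^4" unfolding A_def by (simp only: of_int_eq_iff)
  have nd: "\<not> M^2 dvd A" using N4[OF e cop M NA] unfolding A_def .
  have dx: "den x = e^2"
  proof -
    have "x = of_int (M^2) / of_int (e^2)" unfolding xr r by (simp add: power_divide)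
    moreover have "gcd (M^2) (e^2) = 1" using cop by simp
    ultimately show ?thesis using den_frac[of "e^2" "M^2"] e by simp
  qed
  have "phi x = (r^4 + dq*r^2 - dq^2) / r^2" unfolding phi_def xr
    by (simp add: power2_eq_square power4_eq_xxxx)
  also have "\<dots> = ((r^4 + dq*r^2 - dq^2) * S^4) / (r^2 * S^4)" using S0 by simp
  also have "\<dots> = ((r*S)^4 + dq*(r*S)^2*S^2 - dq^2*S^4) / ((r*S)^2 * S^2)"
    by (simp add: algebra_simps power2_eq_square power4_eq_xxxx)
  also have "\<dots> = of_int A / of_int (M^2 * e^2)" unfolding rS unfolding S_def A_def by simp
  finally have phix: "phi x = of_int A / of_int (M^2 * e^2)" .
  have copA: "coprime A (e^2)"
  proof -
    have "A = (M^2)^2 + e^2 * (d*M^2 - d^2*e^2)" unfolding A_def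
      by (simp add: algebra_simps power2_eq_square power4_eq_xxxx)
    moreover have "coprime (M^2) (e^2)" using cop by simp
    ultimately show ?thesis using coprime_plus_mult[of "M^2" "e^2"] by simp
  qed
  have B0: "M^2 * e^2 \<noteq> 0" using M e by simp
  have "\<bar>M^2 * e^2\<bar> = e^2 * M^2" by (simp add: abs_mult)
  from den_DL[OF B0 _ copA this] e
  have dphi: "den (phi x) = e^2 * (M^2 div gcd A (M^2 * e^2))" and g: "gcd A (M^2 * e^2) dvd M^2"
    unfolding phix by auto
  define G where "G = gcd A (M^2 * e^2)"
  have Gpos: "G > 0" unfolding G_def using B0 by simp
  obtain k where k: "M^2 = G * k" using g unfolding G_def by blast
  have kpos: "k > 0" using k Gpos M by (metis zero_less_mult_pos power2_less_eq_zero_iff not_less zero_less_power2)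
  have "k \<noteq> 1"
  proof
    assume "k = 1"
    hence "M^2 = G" using k by simp
    hence "M^2 dvd A" unfolding G_def by (metis gcd_dvd1)
    thus False using nd by simp
  qed
  hence k2: "k \<ge> 2" using kpos by simp
  have "M^2 div G = k" using k Gpos by simp
  hence "den (phi x) = e^2 * k" using dphi G_def by simp
  moreover have "e^2 * 1 < e^2 * k" using k2 e by (intro mult_strict_left_mono) auto
  ultimately show ?thesis using dx by simp
qed

lemma lift1:
  assumes E: "onE x y" and xr: "x = r^2" and r0: "r \<noteq> 0"
  shows "\<exists>X Y. X \<noteq> 0 \<and> onE' X Y \<and> psi X = x"
proof -
  define w where "w = y / r"
  have w2: "w^2 = r^4 + dq*r^2 - dq^2" using w_rel[OF E xr r0] w_def by simp
  define X where "X = dq + 2*r^2 + 2*w"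
  have "X^2 - 2*dq*X + 5*dq^2 - 4*r^2*X = 4*(w^2 - (r^4 + dq*r^2 - dq^2))"
    unfolding X_def by (simp add: algebra_simps power2_eq_square power4_eq_xxxx)
  hence key: "X^2 - 2*dq*X + 5*dq^2 = 4*r^2*X" using w2 by simp
  have X0: "X \<noteq> 0"
  proof
    assume "X = 0"
    hence "5*dq^2 = 0" using key by simp
    thus False using dq_nz by simp
  qed
  have "(2*r*X)^2 = X * (4*r^2*X)" by (simp add: algebra_simps power2_eq_square)
  also have "\<dots> = X^3 - 2*dq*X^2 + 5*dq^2*X" unfolding key[symmetric]
    by (simp add: algebra_simps power2_eq_square power3_eq_cube)
  finally have "onE' X (2*r*X)" unfolding onE'_def .
  moreover have "psi X = x" unfolding psi_def key xr using X0 by simp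
  ultimately show ?thesis using X0 by blast
qed

lemma lift2:
  assumes E: "onE' X Y" and Xs: "X = s^2" and s0: "s \<noteq> 0"
  shows "\<exists>x y. x \<noteq> 0 \<and> onE x y \<and> phi x = X"
proof -
  define w where "w = Y / s"
  have "Y^2 = s^2 * (s^4 - 2*dq*s^2 + 5*dq^2)" using E Xs unfolding onE'_def
    by (simp add: algebra_simps power2_eq_square power3_eq_cube power4_eq_xxxx)
  hence w2: "w^2 = s^4 - 2*dq*s^2 + 5*dq^2" using s0 unfolding w_def by (simp add: power_divide)
  define x where "x = (s^2 - dq + w) / 2"
  have "4*(x^2 + dq*x - dq^2 - s^2*x) = w^2 - (s^4 - 2*dq*s^2 + 5*dq^2)"
    unfolding x_def by (simp add: field_simps power2_eq_square power4_eq_xxxx)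
  hence key: "x^2 + dq*x - dq^2 = s^2*x" using w2 by simp
  have x0: "x \<noteq> 0"
  proof
    assume "x = 0"
    hence "dq^2 = 0" using key by simp
    thus False using dq_nz by simp
  qed
  have "(s*x)^2 = x * (s^2*x)" by (simp add: algebra_simps power2_eq_square)
  also have "\<dots> = x^3 + dq*x^2 - dq^2*x" unfolding key[symmetric]
    by (simp add: algebra_simps power2_eq_square power3_eq_cube)
  finally have "onE x (s*x)" unfolding onE_def .
  moreover have "phi x = X" unfolding phi_def key Xs using x0 by simp
  ultimately show ?thesis using x0 by blast
qed

lemma transT:
  assumes E: "onE x y" and x0: "x \<noteq> 0"
  shows "onE (-(dq^2)/x) (dq^2*y/x^2) \<and> phi (-(dq^2)/x) = phi x"
proof
  have y2: "y^2 = x^3 + dq*x^2 - dq^2*x" using E unfolding onE_def .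
  have "(dq^2*y/x^2)^2 = dq^4 * y^2 / x^4" by (simp add: power_divide power_mult_distrib flip: power_mult)
  also have "\<dots> = dq^4 * (x^3 + dq*x^2 - dq^2*x) / x^4" unfolding y2 ..
  also have "\<dots> = (-(dq^2)/x)^3 + dq*(-(dq^2)/x)^2 - dq^2*(-(dq^2)/x)" using x0
    by (simp add: field_simps power2_eq_square power3_eq_cube power4_eq_xxxx)
  finally show "onE (-(dq^2)/x) (dq^2*y/x^2)" unfolding onE_def .
  show "phi (-(dq^2)/x) = phi x" using x0 dq_nz unfolding phi_def
    by (simp add: field_simps power2_eq_square)
qed

lemma transT':
  assumes E: "onE' x y" and x0: "x \<noteq> 0"
  shows "onE' (5*dq^2/x) (5*dq^2*y/x^2) \<and> psi (5*dq^2/x) = psi x"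
proof
  have y2: "y^2 = x^3 - 2*dq*x^2 + 5*dq^2*x" using E unfolding onE'_def .
  have "(5*dq^2*y/x^2)^2 = 25*dq^4 * y^2 / x^4" by (simp add: power_divide power_mult_distrib flip: power_mult)
  also have "\<dots> = 25*dq^4 * (x^3 - 2*dq*x^2 + 5*dq^2*x) / x^4" unfolding y2 ..
  also have "\<dots> = (5*dq^2/x)^3 - 2*dq*(5*dq^2/x)^2 + 5*dq^2*(5*dq^2/x)" using x0
    by (simp add: field_simps power2_eq_square power3_eq_cube power4_eq_xxxx)
  finally show "onE' (5*dq^2/x) (5*dq^2*y/x^2)" unfolding onE'_def .
  show "psi (5*dq^2/x) = psi x" using x0 dq_nz unfolding psi_def
    by (simp add: field_simps power2_eq_square)
qed

end

context ecd
begin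

lemma no_pts_aux:
  "onE x y \<Longrightarrow> x \<noteq> 0 \<Longrightarrow> nat (den (phi x)) = n \<Longrightarrow> False"
proof (induction n arbitrary: x y rule: less_induct)
  case (less n)
  note E = less.prems(1) and x0 = less.prems(2) and nx = less.prems(3)
  obtain r where r0: "r \<noteq> 0" and xr: "x = r^2 \<or> x = -(r^2)" using N1rat[OF E x0] by blast
  obtain x1 y1 r1 where E1: "onE x1 y1" and x1r: "x1 = r1^2" and r10: "r1 \<noteq> 0" and px1: "phi x1 = phi x"
  proof (cases "x = r^2")
    case True thus ?thesis using that E r0 by blast
  next
    case False
    hence xm: "x = -(r^2)" using xr by blast
    have T: "onE (-(dq^2)/x) (dq^2*y/x^2) \<and> phi (-(dq^2)/x) = phi x" using transT[OF E x0] .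
    have "-(dq^2)/x = (dq/r)^2" unfolding xm using r0 by (simp add: power_divide)
    moreover have "dq/r \<noteq> 0" using r0 dq_nz by simp
    ultimately show ?thesis using that T by metis
  qed
  obtain X Y where X0: "X \<noteq> 0" and E1': "onE' X Y" and psX: "psi X = x1" using lift1[OF E1 x1r r10] by blast
  obtain s where s0: "s \<noteq> 0" and Xs: "X = s^2 \<or> X = 5*s^2" using N2rat[OF E1' X0] by blast
  obtain X1 Y1 s1 where E2': "onE' X1 Y1" and X1s: "X1 = s1^2" and s10: "s1 \<noteq> 0" and psX1: "psi X1 = x1"
  proof (cases "X = s^2")
    case True thus ?thesis using that E1' s0 psX by blast
  next
    case False
    hence Xm: "X = 5*s^2" using Xs by blast
    have T: "onE' (5*dq^2/X) (5*dq^2*Y/X^2) \<and> psi (5*dq^2/X) = psi X" using transT'[OF E1' X0] .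
    have "5*dq^2/X = (dq/s)^2" unfolding Xm using s0 by (simp add: power_divide)
    moreover have "dq/s \<noteq> 0" using s0 dq_nz by simp
    ultimately show ?thesis using that T psX by metis
  qed
  obtain x2 y2 where x20: "x2 \<noteq> 0" and E2: "onE x2 y2" and px2: "phi x2 = X1" using lift2[OF E2' X1s s10] by blast
  have X10: "X1 \<noteq> 0" using X1s s10 by simp
  have "den (phi x2) = den X1" using px2 by simp
  also have "\<dots> \<le> den (psi X1)" using N3rat[OF X10] .
  also have "\<dots> = den x1" using psX1 by simp
  also have "\<dots> < den (phi x1)" using N4rat[OF E1 x1r r10] .
  also have "\<dots> = den (phi x)" using px1 by simp
  finally have "nat (den (phi x2)) < n" using nx den_pos[of "phi x2"] by simp
  thus False using less.IH E2 x20 by blast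
qed

lemma no_pts: "onE x y \<Longrightarrow> x = 0"
  using no_pts_aux by blast

end

context ecd
begin

lemma pts:
  assumes "P \<in> ec_points (of_int d) (- (of_int (d ^ 2))) 0"
  shows "P = None \<or> P = Some (0, 0)"
proof (cases P)
  case None thus ?thesis by simp
next
  case (Some xy)
  then obtain x y where P: "P = Some (x, y)" by (cases xy) auto
  hence "y^2 = x^3 + dq * x^2 + (- (of_int (d^2))) * x + 0" using assms unfolding ec_points_def by auto
  hence E: "onE x y" unfolding onE_def by simp
  hence x: "x = 0" using no_pts by blast
  hence "y = 0" using E unfolding onE_def by simp
  thus ?thesis using P x by simp
qed

lemma pow_pts:
  assumes "P = None \<or> P = Some (0::rat, 0::rat)" "c = 0 \<or> c = (2::int)"
  shows "P [^]\<^bsub>ec_group a2 a4 a6\<^esub> c = None"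
  using assms by (auto simp: int_pow_def ec_group_def numeral_2_eq_2)

lemma fold_id:
  assumes "finite A" "A \<subseteq> S" "\<forall>x\<in>S. \<forall>y. g x y = y" "e \<in> D"
  shows "(A, e) \<in> foldSetD D g e"
  using assms
proof (induction A rule: finite_induct)
  case empty thus ?case by (auto intro: foldSetD.emptyI)
next
  case (insert x F)
  hence "(F, e) \<in> foldSetD D g e" by auto
  moreover have "g x e = e" using insert by auto
  ultimately show ?case using foldSetD.insertI[of x F g e D e] insert by auto
qed

lemma fold_id_uniq:
  "(A, z) \<in> foldSetD D g e \<Longrightarrow> A \<subseteq> S \<Longrightarrow> \<forall>x\<in>S. \<forall>y. g x y = y \<Longrightarrow> z = e"
  by (induction rule: foldSetD.induct) auto

lemma foldD_id:
  assumes "finite S" "\<forall>x\<in>S. \<forall>y. g x y = y" "e \<in> D"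
  shows "foldD D g e S = e"
  unfolding foldD_def
  using fold_id[OF assms(1) _ assms(2,3)] fold_id_uniq[of S _ D g e S] assms(2)
  by (intro the_equality) auto

lemma indep_empty:
  assumes "ec_independent (of_int d) (- (of_int (d ^ 2))) 0 S"
  shows "S = {}"
proof (rule ccontr)
  define G where "G = ec_group (of_int d) (- (of_int (d ^ 2))) (0::rat)"
  assume "S \<noteq> {}"
  then obtain P where PS: "P \<in> S" by blast
  have fin: "finite S" and sub: "S \<subseteq> ec_points (of_int d) (- (of_int (d ^ 2))) 0"
    using assms unfolding ec_independent_def by auto
  define c :: "(rat \<times> rat) option \<Rightarrow> int" where "c = (\<lambda>Q. if Q = P then 2 else 0)"
  have f1: "Q [^]\<^bsub>G\<^esub> c Q = None" if "Q \<in> S" for Q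
    unfolding G_def by (rule pow_pts) (use pts sub that in \<open>auto simp: c_def\<close>)
  have eqf: "\<forall>x\<in>S. \<forall>y. (monoid.mult G \<circ> (\<lambda>Q. Q [^]\<^bsub>G\<^esub> c Q)) x y = y"
    using f1 by (auto simp: G_def ec_group_def)
  have "None \<in> carrier G" by (simp add: G_def ec_group_def ec_points_def)
  hence "foldD (carrier G) (monoid.mult G \<circ> (\<lambda>Q. Q [^]\<^bsub>G\<^esub> c Q)) None S = None"
    using foldD_id[OF fin eqf] by blast
  hence "finprod G (\<lambda>Q. Q [^]\<^bsub>G\<^esub> c Q) S = None"
    unfolding finprod_def using fin by (simp add: G_def ec_group_def)
  hence "c P = 0" using assms PS unfolding ec_independent_def G_def by blast
  thus False by (simp add: c_def)
qed

end

lemma prime5: "prime (5::nat)"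
proof -
  have "{2..<5::nat} = {2,3,4}" by auto
  thus ?thesis unfolding prime_nat_iff' by simp
qed

lemma nr_m1:
  fixes p :: nat
  assumes p: "prime p" and p4: "p mod 4 = 3"
  shows "\<not> QuadRes (int p) (-1)"
proof
  assume Q: "QuadRes (int p) (-1)"
  have p2: "2 < p" using p4 prime_gt_1_nat[OF p] by (cases "p = 2") auto
  have e: "[Legendre (-1) (int p) = (-1) ^ ((p - 1) div 2)] (mod int p)" using euler_criterion[OF p p2] .
  have nz: "\<not> [-1 = 0] (mod int p)"
  proof
    assume "[-1 = 0] (mod int p)"
    hence "int p dvd 1" by (simp add: cong_iff_dvd_diff)
    thus False using p2 by simp
  qed
  have L: "Legendre (-1) (int p) = 1" using Q nz unfolding Legendre_def by simp
  have "odd ((p - 1) div 2)"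
  proof -
    define q where "q = p div 4"
    have "p = 4*q + 3" using p4 div_mult_mod_eq[of p 4] unfolding q_def by linarith
    hence "p - 1 = 2 * (2*q + 1)" by simp
    hence "(p - 1) div 2 = 2*q + 1" by simp
    thus ?thesis by simp
  qed
  hence "(-1::int) ^ ((p - 1) div 2) = -1" by simp
  hence "[1 = -1] (mod int p)" using e L by simp
  hence "int p dvd 2" by (simp add: cong_iff_dvd_diff)
  hence "p dvd 2" by presburger
  hence "p \<le> 2" by (rule dvd_imp_le) simp
  thus False using p2 by simp
qed

lemma sq_mod5: "(y::int)^2 mod 5 \<in> {0,1,4}"
proof -
  have "y^2 mod 5 = (y mod 5)^2 mod 5" by (simp add: power_mod)
  moreover have "y mod 5 = 0 \<or> y mod 5 = 1 \<or> y mod 5 = 2 \<or> y mod 5 = 3 \<or> y mod 5 = 4" by auto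
  ultimately show ?thesis by (elim disjE) (simp_all add: power2_eq_square)
qed


lemma nr_5:
  fixes p :: nat
  assumes p: "prime p" and p5: "p mod 5 = 2 \<or> p mod 5 = 3" and p2: "2 < p"
  shows "\<not> QuadRes (int p) 5"
proof
  assume Q: "QuadRes (int p) 5"
  have p5': "p \<noteq> 5" using p5 by auto
  have QR: "Legendre (int p) 5 * Legendre 5 (int p) = (-1) ^ ((p - 1) div 2 * ((5 - 1) div 2))"
    using Quadratic_Reciprocity[OF p p2 prime5 _ p5'] by simp
  have "even ((p - 1) div 2 * ((5 - 1) div 2))" by simp
  hence QR1: "Legendre (int p) 5 * Legendre 5 (int p) = 1" using QR by simp
  have ip: "int p mod 5 = int (p mod 5)" by (simp only: of_nat_mod of_nat_numeral)
  have nq: "\<not> QuadRes 5 (int p)"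
  proof
    assume "QuadRes 5 (int p)"
    then obtain y where "[y^2 = int p] (mod 5)" unfolding QuadRes_def by blast
    hence "y^2 mod 5 = int p mod 5" by (simp add: cong_def)
    moreover have "int p mod 5 = 2 \<or> int p mod 5 = 3" using p5 unfolding ip by auto
    ultimately show False using sq_mod5[of y] by auto
  qed
  have "\<not> [int p = 0] (mod 5)" using p5 unfolding cong_def ip by auto
  hence "Legendre (int p) 5 = -1" using nq unfolding Legendre_def by simp
  hence "Legendre 5 (int p) = -1" using QR1 by simp
  moreover have "Legendre 5 (int p) = 1"
  proof -
    have "\<not> [5 = 0] (mod int p)"
    proof
      assume "[5 = 0] (mod int p)"
      hence "int p dvd 5" by (simp add: cong_iff_dvd_diff)
      hence "int p dvd int 5" by simp
      hence "p dvd 5" by (simp only: int_dvd_int_iff)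
      hence "p = 5" using p prime5 by (simp add: primes_dvd_imp_eq)
      thus False using p5' by simp
    qed
    thus ?thesis using Q unfolding Legendre_def by simp
  qed
  ultimately show False by simp
qed



context ecd
begin

lemma rank0: "ec_rank (of_int d) (- (of_int (d ^ 2))) 0 = 0"
proof -
  have "{enat (card S) | S. ec_independent (of_int d) (- (of_int (d ^ 2))) 0 S} = {0}"
  proof
    show "{enat (card S) | S. ec_independent (of_int d) (- (of_int (d ^ 2))) 0 S} \<subseteq> {0}"
    proof
      fix x assume "x \<in> {enat (card S) | S. ec_independent (of_int d) (- (of_int (d ^ 2))) 0 S}"
      then obtain S where S: "x = enat (card S)" "ec_independent (of_int d) (- (of_int (d ^ 2))) 0 S" by blast
      have "S = {}" using indep_empty[OF S(2)] .
      thus "x \<in> {0}" using S(1) by (simp add: zero_enat_def)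
    qed
    have "ec_independent (of_int d) (- (of_int (d ^ 2))) 0 {}"
      unfolding ec_independent_def by simp
    thus "{0} \<subseteq> {enat (card S) | S. ec_independent (of_int d) (- (of_int (d ^ 2))) 0 S}"
      by (auto simp: zero_enat_def intro!: exI[of _ "{}"])
  qed
  thus ?thesis unfolding ec_rank_def by simp
qed

end

lemma ecd_from_P:
  fixes P :: "nat set" and d :: int
  assumes fin: "finite P" and ne: "P \<noteq> {}"
    and pr: "\<forall>p\<in>P. prime p \<and> (p mod 20 = 3 \<or> p mod 20 = 7)"
    and dd: "d = (\<Prod>p\<in>P. - int p)"
  shows "ecd d"
proof -
  have pfacts: "prime p \<and> p mod 4 = 3 \<and> (p mod 5 = 2 \<or> p mod 5 = 3) \<and> 2 < p" if "p \<in> P" for p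
  proof -
    have h: "prime p" "p mod 20 = 3 \<or> p mod 20 = 7" using pr that by auto
    have "p mod 4 = p mod 20 mod 4" by (simp add: mod_mod_cancel)
    hence "p mod 4 = 3" using h(2) by auto
    moreover have "p mod 5 = p mod 20 mod 5" by (simp add: mod_mod_cancel)
    hence "p mod 5 = 2 \<or> p mod 5 = 3" using h(2) by auto
    moreover have "p \<ge> p mod 20" by simp
    hence "2 < p" using h(2) by linarith
    ultimately show ?thesis using h by blast
  qed
  have dvd_d: "\<exists>p\<in>P. q = int p" if q: "prime q" "q dvd d" for q :: int
  proof -
    obtain p where p: "p \<in> P" "q dvd - int p" using q fin unfolding dd by (auto simp: prime_dvd_prod_iff)
    hence "q dvd int p" by simp
    moreover have "prime (int p)" using pfacts[OF p(1)] by simp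
    ultimately have "q = int p" using q(1) by (simp add: primes_dvd_imp_eq)
    thus ?thesis using p by blast
  qed
  have split: "d = (- int p) * (\<Prod>p'\<in>P - {p}. - int p')" if "p \<in> P" for p
    unfolding dd using prod.remove[OF fin that, of "\<lambda>p. - int p"] by simp
  have Rnz: "(\<Prod>p'\<in>P - {p}. - int p') \<noteq> 0" if "p \<in> P" for p
    using fin pfacts by (auto simp: prod_zero_iff)
  show ?thesis
  proof
    obtain p0 where p0: "p0 \<in> P" using ne by blast
    define R where "R = (\<Prod>p'\<in>P - {p0}. - int p')"
    have "\<bar>d\<bar> = int p0 * \<bar>R\<bar>" using split[OF p0] unfolding R_def by (simp add: abs_mult)
    moreover have "\<bar>R\<bar> \<ge> 1" using Rnz[OF p0] unfolding R_def by linarith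
    moreover have "int p0 \<ge> 3" using pfacts[OF p0] by linarith
    ultimately show "3 \<le> \<bar>d\<bar>" by (metis mult.right_neutral mult_mono order_trans zero_le_numeral of_nat_0_le_iff zero_le_one)
  next
    fix q :: int assume q: "prime q" "q dvd d"
    obtain p where p: "p \<in> P" "q = int p" using dvd_d[OF q] by blast
    show "\<not> q^2 dvd d"
    proof
      assume "q^2 dvd d"
      hence "q * q dvd q * (- (\<Prod>p'\<in>P - {p}. - int p'))" using split[OF p(1)] p(2) by (simp add: power2_eq_square)
      hence "q dvd (\<Prod>p'\<in>P - {p}. - int p')" using q(1) by (simp add: prime_gt_0_int)
      then obtain p' where p': "p' \<in> P - {p}" "q dvd - int p'" using q(1) fin by (auto simp: prime_dvd_prod_iff)
      hence "q dvd int p'" by simp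
      moreover have "prime (int p')" using pfacts p' by simp
      ultimately have "q = int p'" using q(1) by (simp add: primes_dvd_imp_eq)
      thus False using p p' by simp
    qed
  next
    fix q :: int assume q: "prime q" "q dvd d"
    obtain p where p: "p \<in> P" "q = int p" using dvd_d[OF q] by blast
    show "\<not> QuadRes q 5" using nr_5 pfacts[OF p(1)] p(2) by blast
  next
    fix q :: int assume q: "prime q" "q dvd d"
    obtain p where p: "p \<in> P" "q = int p" using dvd_d[OF q] by blast
    show "\<not> QuadRes q (-1)" using nr_m1 pfacts[OF p(1)] p(2) by blast
  qed
qed

theorem proposition2p11:
  fixes P :: "nat set" and d :: int
  assumes "finite P" and "P \<noteq> {}"
    and "\<forall>p\<in>P. prime p \<and> (p mod 20 = 3 \<or> p mod 20 = 7)"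
    and "d = (\<Prod>p\<in>P. - int p)"
  shows "ec_rank (of_int d) (- (of_int (d ^ 2))) 0 = 0"
proof -
  interpret ecd d using ecd_from_P[OF assms] .
  show ?thesis by (rule rank0)
qed

end
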